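(* Over profiles whose ballots are strict weak orders (ties allowed), let $F$ be a VSCC satisfying Anonymity, Neutrality, Neutral Indifference, Monotonicity for two-candidate profiles (in particular, if it satisfies Monotonicity), Neutral Reversal, and Coherent IIA. Then $SC(\mathbf P)\subseteq F(\mathbf P)$ for every profile $\mathbf P$.
   Context: Profiles: $\mathbf P:V\to\mathcal W(X)$, $V$ nonempty finite set of voters, $X=X(\mathbf P)$ nonempty finite set of candidates (from fixed infinite sets), $\mathcal W(X)$ the strict weak orders on $X$ (irreflexive, transitive, negatively transitive; the empty relation is allowed). "Ranks $x$ above $y$" means strictly. $\mathbf P_{|Y}$ restricts ballots to $Y$. $\mathrm{Margin}_{\mathbf P}(x,y)$ = #voters with $x$ strictly above $y$ minus #voters with $y$ strictly above $x$. $\mathcal M(\mathbf P)$: edges $x\to y$ weighted $\mathrm{Margin}_{\mathbf P}(x,y)$ when positive. Majority paths and strength (minimum consecutive margin) as usual. $(x,y)\in sc(\mathbf P)$ iff $\mathrm{Margin}_{\mathbf P}(x,y)>0$ exceeds the strength of every majority path from $y$ to $x$; $SC(\mathbf P)$ = set of $y$ with no $x$ such that $(x,y)\in sc(\mathbf P)$. A VSCC is $F$ with $\varnothing\ne F(\mathbf P)\subseteq X(\mathbf P)$. Moving up one place: for strict weak order $\succ$ on finite $X$ and $x$ not greatest, let $x'\ne x$ be $\succ$-minimal with $x\not\succ x'$; $\succ'$ results from moving $x$ up one place if it agrees with $\succ$ off $x$, and: if $x$ is tied with $x'$ in $\succ$ then in $\succ'$ $x$ is tied with nothing, $x\succ'x'$,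 and $y\succ x$ implies $y\succ'x$; if $x$ is tied with nothing in $\succ$, then $x$ is tied with $x'$ in $\succ'$. Axioms: Anonymity (permuting which voter has which ballot, same voter set, leaves $F$ unchanged); Neutrality (if a bijection $\pi$ of candidates transforms $\mathbf P$ into $\mathbf P'$ ballot-wise, same voters and candidates, then $x\in F(\mathbf P)\iff\pi(x)\in F(\mathbf P')$); Neutral Indifference (adding a voter with empty ballot leaves $F$ unchanged); Monotonicity (resp. for two-candidate profiles): moving $x$ up one place in one ballot of a (resp. two-candidate) profile preserves $x\in F(\cdot)$; Neutral Reversal (adding two voters with converse ballots leaves $F$ unchanged); Coherent IIA: with $\mathbf P\rightsquigarrow_{x,y}\mathbf P'$ meaning $\mathbf P_{|\{x,y\}}=\mathbf P'_{|\{x,y\}}$ and $\mathcal M(\mathbf P')$ obtainable from $\mathcal M(\mathbf P)$ by deleting zero or more candidates other than $x,y$ and deleting or reducing weights of zero or more edges not connecting $x,y$: if $y\notin F(\mathbf P)$, some $x\in X(\mathbf P)$ has $y\notin F(\mathbf P')$ for every $\mathbf P'$ with $\mathbf P\rightsquigarrow_{x,y}\mathbf P'$. *)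

theory Defs
  imports Main
begin

text \<open>A profile is a triple (V, X, P): a voter set V, a candidate set X and a
ballot function P assigning to each voter a strict relation on candidates
(P i is "strictly above").  Ballots of non-voters are fixed to be empty so that
a profile is determined by its restriction to V.\<close>

type_synonym ('v,'c) prof = "'v set \<times> 'c set \<times> ('v \<Rightarrow> ('c \<times> 'c) set)"

definition voters :: "('v,'c) prof \<Rightarrow> 'v set" where
  "voters Pr = fst Pr"

definition cands :: "('v,'c) prof \<Rightarrow> 'c set" where
  "cands Pr = fst (snd Pr)"

definition ballot :: "('v,'c) prof \<Rightarrow> 'v \<Rightarrow> ('c \<times> 'c) set" where
  "ballot Pr = snd (snd Pr)"

definition strict_weak_order :: "'c set \<Rightarrow> ('c \<times> 'c) set \<Rightarrow> bool" where
  "strict_weak_order X R \<longleftrightarrow>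
     R \<subseteq> X \<times> X \<and>
     (\<forall>a\<in>X. (a,a) \<notin> R) \<and>
     (\<forall>a\<in>X. \<forall>b\<in>X. \<forall>c\<in>X. (a,b) \<in> R \<and> (b,c) \<in> R \<longrightarrow> (a,c) \<in> R) \<and>
     (\<forall>a\<in>X. \<forall>b\<in>X. \<forall>c\<in>X. (a,b) \<in> R \<longrightarrow> (a,c) \<in> R \<or> (c,b) \<in> R)"

definition profile :: "('v,'c) prof \<Rightarrow> bool" where
  "profile Pr \<longleftrightarrow>
     finite (voters Pr) \<and> voters Pr \<noteq> {} \<and>
     finite (cands Pr) \<and> cands Pr \<noteq> {} \<and>
     (\<forall>i\<in>voters Pr. strict_weak_order (cands Pr) (ballot Pr i)) \<and>
     (\<forall>i. i \<notin> voters Pr \<longrightarrow> ballot Pr i = {})"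

definition margin :: "('v,'c) prof \<Rightarrow> 'c \<Rightarrow> 'c \<Rightarrow> int" where
  "margin Pr x y =
     int (card {i \<in> voters Pr. (x,y) \<in> ballot Pr i})
     - int (card {i \<in> voters Pr. (y,x) \<in> ballot Pr i})"

definition majority_path :: "('v,'c) prof \<Rightarrow> 'c list \<Rightarrow> 'c \<Rightarrow> 'c \<Rightarrow> bool" where
  "majority_path Pr p a b \<longleftrightarrow>
     length p \<ge> 2 \<and> distinct p \<and> set p \<subseteq> cands Pr \<and>
     hd p = a \<and> last p = b \<and>
     (\<forall>k < length p - 1. margin Pr (p ! k) (p ! Suc k) > 0)"

definition path_strength :: "('v,'c) prof \<Rightarrow> 'c list \<Rightarrow> int" where
  "path_strength Pr p = Min (set (map (\<lambda>(a,b). margin Pr a b) (zip p (tl p))))"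

definition sc :: "('v,'c) prof \<Rightarrow> ('c \<times> 'c) set" where
  "sc Pr = {(x,y). x \<in> cands Pr \<and> y \<in> cands Pr \<and> margin Pr x y > 0 \<and>
              (\<forall>p. majority_path Pr p y x \<longrightarrow> margin Pr x y > path_strength Pr p)}"

definition SC :: "('v,'c) prof \<Rightarrow> 'c set" where
  "SC Pr = {y \<in> cands Pr. \<not> (\<exists>x. (x,y) \<in> sc Pr)}"

definition VSCC :: "(('v,'c) prof \<Rightarrow> 'c set) \<Rightarrow> bool" where
  "VSCC F \<longleftrightarrow> (\<forall>Pr. profile Pr \<longrightarrow> F Pr \<noteq> {} \<and> F Pr \<subseteq> cands Pr)"

definition anonymity :: "(('v,'c) prof \<Rightarrow> 'c set) \<Rightarrow> bool" where
  "anonymity F \<longleftrightarrow>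
     (\<forall>Pr Pr' \<pi>. profile Pr \<and> profile Pr' \<and> voters Pr' = voters Pr \<and> cands Pr' = cands Pr \<and>
        bij_betw \<pi> (voters Pr) (voters Pr) \<and>
        (\<forall>i\<in>voters Pr. ballot Pr' i = ballot Pr (\<pi> i))
        \<longrightarrow> F Pr' = F Pr)"

definition neutrality :: "(('v,'c) prof \<Rightarrow> 'c set) \<Rightarrow> bool" where
  "neutrality F \<longleftrightarrow>
     (\<forall>Pr Pr' \<pi>. profile Pr \<and> profile Pr' \<and> voters Pr' = voters Pr \<and> cands Pr' = cands Pr \<and>
        bij_betw \<pi> (cands Pr) (cands Pr) \<and>
        (\<forall>i\<in>voters Pr. ballot Pr' i = {(\<pi> a, \<pi> b) | a b. (a,b) \<in> ballot Pr i})
        \<longrightarrow> (\<forall>x\<in>cands Pr. x \<in> F Pr \<longleftrightarrow> \<pi> x \<in> F Pr'))"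

definition neutral_indifference :: "(('v,'c) prof \<Rightarrow> 'c set) \<Rightarrow> bool" where
  "neutral_indifference F \<longleftrightarrow>
     (\<forall>Pr v. profile Pr \<and> v \<notin> voters Pr \<longrightarrow>
        F (insert v (voters Pr), cands Pr, ballot Pr) = F Pr)"

definition tied :: "('c \<times> 'c) set \<Rightarrow> 'c \<Rightarrow> 'c \<Rightarrow> bool" where
  "tied R a b \<longleftrightarrow> (a,b) \<notin> R \<and> (b,a) \<notin> R"

definition moved_up_one :: "'c set \<Rightarrow> ('c \<times> 'c) set \<Rightarrow> 'c \<Rightarrow> ('c \<times> 'c) set \<Rightarrow> bool" where
  "moved_up_one X R x R' \<longleftrightarrow>
     x \<in> X \<and> strict_weak_order X R' \<and>
     \<comment> \<open>x is not greatest\<close>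
     (\<exists>z\<in>X. z \<noteq> x \<and> (x,z) \<notin> R) \<and>
     \<comment> \<open>agreement off x\<close>
     (\<forall>a\<in>X. \<forall>b\<in>X. a \<noteq> x \<and> b \<noteq> x \<longrightarrow> ((a,b) \<in> R' \<longleftrightarrow> (a,b) \<in> R)) \<and>
     (\<forall>x'. (x' \<in> X \<and> x' \<noteq> x \<and> (x,x') \<notin> R \<and>
             \<not> (\<exists>z\<in>X. z \<noteq> x \<and> (x,z) \<notin> R \<and> (x',z) \<in> R)) \<longrightarrow>
        ((tied R x x' \<longrightarrow>
            (\<forall>z\<in>X. z \<noteq> x \<longrightarrow> \<not> tied R' x z) \<and> (x,x') \<in> R' \<and>
            (\<forall>y\<in>X. (y,x) \<in> R \<longrightarrow> (y,x) \<in> R')) \<and>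
         ((\<forall>z\<in>X. z \<noteq> x \<longrightarrow> \<not> tied R x z) \<longrightarrow> tied R' x x')))"

definition monotonicity_two :: "(('v,'c) prof \<Rightarrow> 'c set) \<Rightarrow> bool" where
  "monotonicity_two F \<longleftrightarrow>
     (\<forall>Pr i x R'. profile Pr \<and> card (cands Pr) = 2 \<and> i \<in> voters Pr \<and>
        moved_up_one (cands Pr) (ballot Pr i) x R' \<and> x \<in> F Pr
        \<longrightarrow> x \<in> F (voters Pr, cands Pr, (ballot Pr)(i := R')))"

definition neutral_reversal :: "(('v,'c) prof \<Rightarrow> 'c set) \<Rightarrow> bool" where
  "neutral_reversal F \<longleftrightarrow>
     (\<forall>Pr v1 v2 R. profile Pr \<and> v1 \<notin> voters Pr \<and> v2 \<notin> voters Pr \<and> v1 \<noteq> v2 \<and>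
        strict_weak_order (cands Pr) R \<longrightarrow>
        F (voters Pr \<union> {v1, v2}, cands Pr, (ballot Pr)(v1 := R, v2 := R\<inverse>)) = F Pr)"

definition restrict_prof :: "('v,'c) prof \<Rightarrow> 'c set \<Rightarrow> ('v,'c) prof" where
  "restrict_prof Pr Y = (voters Pr, Y, \<lambda>i. ballot Pr i \<inter> (Y \<times> Y))"

text \<open>P \<leadsto>_{x,y} P': equal restrictions to {x,y}; the majority graph of P' arises
from that of P by deleting candidates other than x,y and deleting/reducing
weights of edges not connecting x and y.\<close>
definition coh_rel :: "('v,'c) prof \<Rightarrow> 'c \<Rightarrow> 'c \<Rightarrow> ('v,'c) prof \<Rightarrow> bool" where
  "coh_rel Pr x y Pr' \<longleftrightarrow>
     restrict_prof Pr {x,y} = restrict_prof Pr' {x,y} \<and>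
     {x,y} \<subseteq> cands Pr' \<and> cands Pr' \<subseteq> cands Pr \<and>
     (\<forall>a\<in>cands Pr'. \<forall>b\<in>cands Pr'.
        (margin Pr' a b > 0 \<longrightarrow> margin Pr a b > 0 \<and> margin Pr' a b \<le> margin Pr a b) \<and>
        ({a,b} = {x,y} \<longrightarrow> margin Pr' a b = margin Pr a b))"

definition coherent_IIA :: "(('v,'c) prof \<Rightarrow> 'c set) \<Rightarrow> bool" where
  "coherent_IIA F \<longleftrightarrow>
     (\<forall>Pr y. profile Pr \<and> y \<in> cands Pr \<and> y \<notin> F Pr \<longrightarrow>
        (\<exists>x\<in>cands Pr. \<forall>Pr'. profile Pr' \<and> coh_rel Pr x y Pr' \<longrightarrow> y \<notin> F Pr'))"

end

theory Submission
  imports Defs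
begin


lemma swo_sub: "strict_weak_order X R \<Longrightarrow> (a,b) \<in> R \<Longrightarrow> a \<in> X \<and> b \<in> X"
  unfolding strict_weak_order_def by blast

lemma swo_asym: "strict_weak_order X R \<Longrightarrow> (a,b) \<in> R \<Longrightarrow> (b,a) \<notin> R"
  unfolding strict_weak_order_def by blast

lemma swo_irrefl: "strict_weak_order X R \<Longrightarrow> (a,a) \<notin> R"
  unfolding strict_weak_order_def by blast

lemma margin_self[simp]: "margin Pr a a = 0"
  unfolding margin_def by simp

lemma margin_anti: "margin Pr a b = - margin Pr b a"
  unfolding margin_def by simp

lemma restrict_simps[simp]:
  "voters (restrict_prof Pr Y) = voters Pr"
  "cands (restrict_prof Pr Y) = Y"
  "ballot (restrict_prof Pr Y) i = ballot Pr i \<inter> (Y \<times> Y)"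
  unfolding restrict_prof_def voters_def cands_def ballot_def by auto

lemma prof_simps[simp]:
  "voters (V, X, B) = V" "cands (V, X, B) = X" "ballot (V, X, B) = B"
  unfolding voters_def cands_def ballot_def by auto

lemma margin_restrict: "a \<in> Y \<Longrightarrow> b \<in> Y \<Longrightarrow> margin (restrict_prof Pr Y) a b = margin Pr a b"
  unfolding margin_def by simp

lemma swo_restrict: "strict_weak_order X R \<Longrightarrow> Y \<subseteq> X \<Longrightarrow> strict_weak_order Y (R \<inter> Y \<times> Y)"
  unfolding strict_weak_order_def by blast

lemma profile_restrict:
  assumes "profile Pr" "Y \<subseteq> cands Pr" "Y \<noteq> {}"
  shows "profile (restrict_prof Pr Y)"
  using assms unfolding profile_def by (auto intro: finite_subset swo_restrict)

lemma coh_rel_restrict: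
  assumes "profile Pr" "x \<in> cands Pr" "y \<in> cands Pr"
  shows "coh_rel Pr x y (restrict_prof Pr {x,y})"
proof -
  have "restrict_prof (restrict_prof Pr {x,y}) {x,y} = restrict_prof Pr {x,y}"
    unfolding restrict_prof_def voters_def cands_def ballot_def by auto
  then show ?thesis using assms unfolding coh_rel_def
    by (auto simp: margin_restrict)
qed

lemma margin_eq_restrict:
  assumes "restrict_prof Pr {x,y} = restrict_prof Pr' {x,y}"
  shows "margin Pr x y = margin Pr' x y"
proof -
  have "margin Pr x y = margin (restrict_prof Pr {x,y}) x y" by (simp add: margin_restrict)
  also have "\<dots> = margin (restrict_prof Pr' {x,y}) x y" using assms by simp
  also have "\<dots> = margin Pr' x y" by (simp add: margin_restrict)
  finally show ?thesis .
qed

lemma fiber_bij: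
  assumes "finite V" "\<And>t. card {i\<in>V. f i = t} = card {i\<in>V. g i = t}"
  shows "\<exists>\<sigma>. bij_betw \<sigma> V V \<and> (\<forall>i\<in>V. f i = g (\<sigma> i))"
proof -
  define h where "h t = (SOME h. bij_betw h {i\<in>V. f i = t} {i\<in>V. g i = t})" for t
  have hb: "bij_betw (h t) {i\<in>V. f i = t} {i\<in>V. g i = t}" for t
  proof -
    have "\<exists>h. bij_betw h {i\<in>V. f i = t} {i\<in>V. g i = t}"
      by (rule finite_same_card_bij) (use assms in auto)
    then show ?thesis unfolding h_def by (rule someI_ex)
  qed
  define \<sigma> where "\<sigma> i = h (f i) i" for i
  have s1: "\<sigma> i \<in> V \<and> g (\<sigma> i) = f i" if "i \<in> V" for i
    using bij_betw_apply[OF hb[of "f i"]] that unfolding \<sigma>_def by auto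
  have "inj_on \<sigma> V"
  proof
    fix i j assume ij: "i \<in> V" "j \<in> V" "\<sigma> i = \<sigma> j"
    then have "f i = f j" using s1 by metis
    then have "h (f i) i = h (f i) j" using ij unfolding \<sigma>_def by simp
    then show "i = j" using bij_betw_imp_inj_on[OF hb[of "f i"]] ij \<open>f i = f j\<close>
      unfolding inj_on_def by auto
  qed
  moreover have "\<sigma> ` V = V"
  proof
    show "\<sigma> ` V \<subseteq> V" using s1 by auto
    show "V \<subseteq> \<sigma> ` V"
    proof
      fix k assume k: "k \<in> V"
      have "k \<in> h (g k) ` {i\<in>V. f i = g k}" using hb[of "g k"] k unfolding bij_betw_def by auto
      then obtain i where "i \<in> V" "f i = g k" "k = h (g k) i" by auto
      then have "k = \<sigma> i" unfolding \<sigma>_def by simp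
      then show "k \<in> \<sigma> ` V" using \<open>i \<in> V\<close> by blast
    qed
  qed
  ultimately show ?thesis using s1 unfolding bij_betw_def by metis
qed

lemma prof_eta: "Pr = (voters Pr, cands Pr, ballot Pr)"
  unfolding voters_def cands_def ballot_def by simp

lemma sym_closed:
  assumes an: "anonymity F" and ne: "neutrality F" and P: "profile Pr"
    and pb: "bij_betw \<pi> (cands Pr) (cands Pr)" and sb: "bij_betw \<sigma> (voters Pr) (voters Pr)"
    and img: "\<forall>i\<in>voters Pr. {(\<pi> a, \<pi> b) | a b. (a,b) \<in> ballot Pr i} = ballot Pr (\<sigma> i)"
    and c: "c \<in> cands Pr"
  shows "c \<in> F Pr \<longleftrightarrow> \<pi> c \<in> F Pr"
proof -
  define Pr' where "Pr' = (voters Pr, cands Pr, \<lambda>i. if i \<in> voters Pr then ballot Pr (\<sigma> i) else {})"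
  have P': "profile Pr'" using P bij_betw_apply[OF sb] unfolding Pr'_def profile_def by auto
  have "F Pr' = F Pr"
    by (rule an[unfolded anonymity_def, rule_format, of Pr Pr' \<sigma>]) (use P P' sb in \<open>auto simp: Pr'_def\<close>)
  moreover have "c \<in> F Pr \<longleftrightarrow> \<pi> c \<in> F Pr'"
    by (rule ne[unfolded neutrality_def, rule_format, of Pr Pr' \<pi>]) (use P P' pb img c in \<open>auto simp: Pr'_def\<close>)
  ultimately show ?thesis by simp
qed

lemma setimg: "{(\<pi> a, \<pi> b) | a b. (a,b) \<in> R} = map_prod \<pi> \<pi> ` R"
  by force

lemma two_ballots:
  assumes "profile Q" "cands Q = {x,y}" "i \<in> voters Q"
  shows "ballot Q i = {} \<or> ballot Q i = {(x,y)} \<or> ballot Q i = {(y,x)}"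
proof -
  have s: "strict_weak_order {x,y} (ballot Q i)" using assms unfolding profile_def by auto
  then have "ballot Q i \<subseteq> {x,y} \<times> {x,y}" "(x,x) \<notin> ballot Q i" "(y,y) \<notin> ballot Q i"
    unfolding strict_weak_order_def by auto
  moreover have "(x,y) \<in> ballot Q i \<Longrightarrow> (y,x) \<notin> ballot Q i" using swo_asym[OF s] by blast
  ultimately show ?thesis by blast
qed

lemma two_tie:
  assumes vs: "VSCC F" and an: "anonymity F" and ne: "neutrality F"
    and Q: "profile Q" and cQ: "cands Q = {x,y}" and xy: "x \<noteq> y" and m: "margin Q x y = 0"
  shows "y \<in> F Q"
proof -
  define \<pi> where "\<pi> c = (if c = x then y else if c = y then x else c)" for c
  define im where "im R = map_prod \<pi> \<pi> ` R" for R
  have pp: "\<pi> (\<pi> c) = c" for c unfolding \<pi>_def by auto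
  have "map_prod \<pi> \<pi> \<circ> map_prod \<pi> \<pi> = id" by (auto simp: pp fun_eq_iff)
  then have imim: "im (im R) = R" for R unfolding im_def by (simp add: image_comp)
  have imxy: "im {(x,y)} = {(y,x)}" "im {(y,x)} = {(x,y)}" "im {} = {}"
    unfolding im_def \<pi>_def using xy by auto
  let ?V = "voters Q"
  have fin: "finite ?V" using Q unfolding profile_def by auto
  have cnt: "card {i\<in>?V. ballot Q i = {(x,y)}} = card {i\<in>?V. ballot Q i = {(y,x)}}"
  proof -
    have "{i\<in>?V. ballot Q i = {(x,y)}} = {i\<in>?V. (x,y) \<in> ballot Q i}"
      using two_ballots[OF Q cQ] xy by fastforce
    moreover have "{i\<in>?V. ballot Q i = {(y,x)}} = {i\<in>?V. (y,x) \<in> ballot Q i}"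
      using two_ballots[OF Q cQ] xy by fastforce
    ultimately show ?thesis using m unfolding margin_def by simp
  qed
  have fc: "card {i\<in>?V. im (ballot Q i) = R} = card {i\<in>?V. ballot Q i = R}" for R
  proof -
    have e: "{i\<in>?V. im (ballot Q i) = R} = {i\<in>?V. ballot Q i = im R}"
    proof (rule Collect_cong)
      fix i show "(i\<in>?V \<and> im (ballot Q i) = R) = (i\<in>?V \<and> ballot Q i = im R)"
        using imim by metis
    qed
    consider "R = {(x,y)}" | "R = {(y,x)}" | "R = {}" | "R \<notin> {{},{(x,y)},{(y,x)}}" by blast
    then show ?thesis
    proof cases
      case 4
      have "im R \<notin> {{},{(x,y)},{(y,x)}}"
      proof
        assume "im R \<in> {{},{(x,y)},{(y,x)}}"
        then have "im (im R) \<in> {{},{(x,y)},{(y,x)}}" using imxy by auto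
        then show False using imim 4 by simp
      qed
      then have A: "{i\<in>?V. ballot Q i = im R} = {}" and B: "{i\<in>?V. ballot Q i = R} = {}"
        using two_ballots[OF Q cQ] 4 by auto
      show ?thesis by (simp only: e A B)
    next
      case 1 show ?thesis unfolding e unfolding 1 imxy by (rule cnt[symmetric])
    next
      case 2 show ?thesis unfolding e unfolding 2 imxy by (rule cnt)
    next
      case 3 show ?thesis unfolding e unfolding 3 imxy by (rule refl)
    qed
  qed
  then obtain \<sigma> where sb: "bij_betw \<sigma> ?V ?V" and se: "\<forall>i\<in>?V. im (ballot Q i) = ballot Q (\<sigma> i)"
    using fiber_bij[OF fin fc] by blast
  have pb: "bij_betw \<pi> (cands Q) (cands Q)"
    unfolding cQ bij_betw_def inj_on_def \<pi>_def by auto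
  have img: "\<forall>i\<in>?V. {(\<pi> a, \<pi> b)|a b. (a,b) \<in> ballot Q i} = ballot Q (\<sigma> i)"
    using se unfolding im_def setimg by auto
  have "x \<in> F Q \<longleftrightarrow> \<pi> x \<in> F Q"
    by (rule sym_closed[OF an ne Q pb sb img]) (simp add: cQ)
  then have "x \<in> F Q \<longleftrightarrow> y \<in> F Q" unfolding \<pi>_def by simp
  moreover have "F Q \<noteq> {}" "F Q \<subseteq> {x,y}" using vs[unfolded VSCC_def, rule_format, OF Q] cQ by auto
  ultimately show ?thesis by blast
qed



lemma moved_up_empty:
  assumes "x \<noteq> y"
  shows "moved_up_one {x,y} {} y {(y,x)}"
  using assms unfolding moved_up_one_def strict_weak_order_def tied_def by auto

lemma two_cand:
  assumes vs: "VSCC F" and an: "anonymity F" and ne: "neutrality F" and mo: "monotonicity_two F"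
    and Q: "profile Q" and cQ: "cands Q = {x,y}" and xy: "x \<noteq> y" and m: "margin Q y x \<ge> 0"
  shows "y \<in> F Q"
proof -
  let ?V = "voters Q" and ?B = "ballot Q"
  define GY where "GY = {i\<in>?V. ?B i = {(y,x)}}"
  define GX where "GX = {i\<in>?V. ?B i = {(x,y)}}"
  have fin: "finite ?V" using Q unfolding profile_def by auto
  have GYe: "GY = {i\<in>?V. (y,x) \<in> ?B i}" unfolding GY_def
    using two_ballots[OF Q cQ] xy by fastforce
  have GXe: "GX = {i\<in>?V. (x,y) \<in> ?B i}" unfolding GX_def
    using two_ballots[OF Q cQ] xy by fastforce
  have "card GX \<le> card GY" using m unfolding margin_def GYe GXe by simp
  then obtain S where S: "S \<subseteq> GY" "card S = card GY - card GX" "finite S"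
    using obtain_subset_with_card_n[of "card GY - card GX" GY] by auto
  define Qs where "Qs S' = (?V, {x,y}, \<lambda>i. if i \<in> S - S' then {} else ?B i)" for S'
  have finGY: "finite GY" using fin unfolding GY_def by auto
  have prof: "profile (Qs S')" for S'
    using Q cQ unfolding profile_def Qs_def by (auto simp: strict_weak_order_def)
  have "y \<in> F (Qs S')" if "S' \<subseteq> S" for S'
    using finite_subset[OF that \<open>finite S\<close>] that
  proof (induction S' rule: finite_subset_induct')
    case empty
    have e1: "{i\<in>?V. (y,x) \<in> ballot (Qs {}) i} = GY - S"
      unfolding Qs_def GYe using S(1) by auto
    have nS: "(x,y) \<notin> ?B i" if "i \<in> S" for i
    proof -
      have "i \<in> ?V" "(y,x) \<in> ?B i" using that S(1) GYe by auto
      then show ?thesis using two_ballots[OF Q cQ, of i] xy by auto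
    qed
    have e2: "{i\<in>?V. (x,y) \<in> ballot (Qs {}) i} = GX"
      unfolding Qs_def GXe using nS by auto
    have "card (GY - S) = card GX"
      using S finGY \<open>card GX \<le> card GY\<close> by (simp add: card_Diff_subset)
    then have "margin (Qs {}) x y = 0" unfolding margin_def
      using e1 e2 by (simp add: Qs_def)
    then show ?case using two_tie[OF vs an ne prof, of "{}" x y] xy by (simp add: Qs_def)
  next
    case (insert a S')
    have aV: "a \<in> ?V" using insert S GY_def by auto
    have ba: "ballot (Qs S') a = {}" using insert unfolding Qs_def by auto
    have "y \<in> F (voters (Qs S'), cands (Qs S'), (ballot (Qs S'))(a := {(y,x)}))"
      apply (rule mo[unfolded monotonicity_two_def, rule_format])
      using prof[of S'] xy aV insert.IH moved_up_empty[OF xy] ba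
      by (auto simp: Qs_def)
    moreover have "(voters (Qs S'), cands (Qs S'), (ballot (Qs S'))(a := {(y,x)})) = Qs (insert a S')"
      using insert aV S(1) unfolding Qs_def GY_def by (auto simp: fun_eq_iff)
    ultimately show ?case by simp
  qed
  moreover have "Qs S = Q" unfolding Qs_def using prof_eta[of Q] cQ by (auto simp: fun_eq_iff)
  ultimately show ?thesis by auto
qed



definition sballot :: "'c set \<Rightarrow> ('c \<Rightarrow> nat) \<Rightarrow> ('c \<times> 'c) set" where
  "sballot X f = {(a,b). a \<in> X \<and> b \<in> X \<and> f a > f b}"

lemma swo_sballot: "strict_weak_order X (sballot X f)"
  unfolding strict_weak_order_def sballot_def by auto

lemma swo_converse: "strict_weak_order X R \<Longrightarrow> strict_weak_order X (R\<inverse>)"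
  unfolding strict_weak_order_def by blast

lemma swo_empty[simp]: "strict_weak_order X {}"
  unfolding strict_weak_order_def by auto

lemma add_empties:
  assumes ni: "neutral_indifference F" and P: "profile Pr" and E: "finite E" "E \<inter> voters Pr = {}"
  shows "profile (voters Pr \<union> E, cands Pr, ballot Pr) \<and> F (voters Pr \<union> E, cands Pr, ballot Pr) = F Pr"
  using E
proof (induction E rule: finite_induct)
  case empty
  then show ?case using prof_eta[of Pr] P by simp
next
  case (insert v E)
  let ?P = "(voters Pr \<union> E, cands Pr, ballot Pr)"
  have IH: "profile ?P" "F ?P = F Pr" using insert by auto
  have v: "v \<notin> voters ?P" using insert by auto
  have "F (insert v (voters ?P), cands ?P, ballot ?P) = F ?P"
    using ni[unfolded neutral_indifference_def, rule_format, of ?P v] IH v by auto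
  moreover have "profile (insert v (voters ?P), cands ?P, ballot ?P)"
    using IH(1) v insert(4) unfolding profile_def by auto
  ultimately show ?case using IH by simp
qed

lemma add_pairs:
  assumes nr: "neutral_reversal F" and inf: "infinite (UNIV :: 'v set)"
    and P: "profile (Pr :: ('v,'c) prof)" and L: "strict_weak_order (cands Pr) L"
    and Lt: "\<forall>a\<in>cands Pr. \<forall>b\<in>cands Pr. a \<noteq> b \<longrightarrow> (a,b) \<in> L \<or> (b,a) \<in> L"
  shows "\<exists>Pr'. profile Pr' \<and> cands Pr' = cands Pr \<and> F Pr' = F Pr \<and> margin Pr' = margin Pr \<and>
     (\<forall>a\<in>cands Pr. \<forall>b\<in>cands Pr. a \<noteq> b \<longrightarrow>
        card {i\<in>voters Pr'. (a,b) \<in> ballot Pr' i} = card {i\<in>voters Pr. (a,b) \<in> ballot Pr i} + k)"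
proof (induction k)
  case 0
  show ?case by (rule exI[of _ Pr]) (use P in auto)
next
  case (Suc k)
  then obtain Q where Q: "profile Q" "cands Q = cands Pr" "F Q = F Pr" "margin Q = margin Pr"
    and cQ: "\<forall>a\<in>cands Pr. \<forall>b\<in>cands Pr. a \<noteq> b \<longrightarrow>
        card {i\<in>voters Q. (a,b) \<in> ballot Q i} = card {i\<in>voters Pr. (a,b) \<in> ballot Pr i} + k"
    by blast
  have fQ: "finite (voters Q)" using Q unfolding profile_def by auto
  obtain v1 where v1: "v1 \<notin> voters Q" using ex_new_if_finite[OF inf fQ] by blast
  obtain v2 where v2: "v2 \<notin> insert v1 (voters Q)" using ex_new_if_finite[OF inf, of "insert v1 (voters Q)"] fQ by auto
  define Q' where "Q' = (voters Q \<union> {v1, v2}, cands Q, (ballot Q)(v1 := L, v2 := L\<inverse>))"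
  have FQ': "F Q' = F Q"
    unfolding Q'_def
    by (rule nr[unfolded neutral_reversal_def, rule_format]) (use Q L v1 v2 in auto)
  have PQ': "profile Q'"
    using Q(1) L swo_converse[OF L] v1 v2 fQ unfolding Q'_def profile_def Q(2) by auto
  have cnt: "card {i\<in>voters Q'. (a,b) \<in> ballot Q' i} = card {i\<in>voters Q. (a,b) \<in> ballot Q i} + 1"
    if ab: "a \<in> cands Pr" "b \<in> cands Pr" "a \<noteq> b" for a b
  proof -
    have ex: "(a,b) \<in> L \<longleftrightarrow> (b,a) \<notin> L" using Lt ab swo_asym[OF L] by blast
    have s: "{i\<in>voters Q'. (a,b) \<in> ballot Q' i} =
      insert (if (a,b) \<in> L then v1 else v2) {i\<in>voters Q. (a,b) \<in> ballot Q i}"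
      using v1 v2 ex unfolding Q'_def by auto
    show ?thesis unfolding s using v1 v2 fQ by (auto simp: card_insert_if)
  qed
  have "margin Q' = margin Q"
  proof (intro ext)
    fix a b
    show "margin Q' a b = margin Q a b"
    proof (cases "a \<in> cands Pr \<and> b \<in> cands Pr \<and> a \<noteq> b")
      case True
      then show ?thesis using cnt[of a b] cnt[of b a] unfolding margin_def by auto
    next
      case False
      have "(a,b) \<notin> ballot Q' i \<and> (b,a) \<notin> ballot Q' i" if "i \<in> voters Q'" for i
      proof -
        have sw: "strict_weak_order (cands Pr) (ballot Q' i)"
          using PQ' that Q(2) unfolding profile_def Q'_def by auto
        show ?thesis using False swo_sub[OF sw] swo_irrefl[OF sw] by blast
      qed
      moreover have "(a,b) \<notin> ballot Q i \<and> (b,a) \<notin> ballot Q i" if "i \<in> voters Q" for i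
      proof -
        have sw: "strict_weak_order (cands Pr) (ballot Q i)"
          using Q that unfolding profile_def by auto
        show ?thesis using False swo_sub[OF sw] swo_irrefl[OF sw] by blast
      qed
      ultimately have E: "{i\<in>voters Q'. (a,b) \<in> ballot Q' i} = {}" "{i\<in>voters Q'. (b,a) \<in> ballot Q' i} = {}"
        "{i\<in>voters Q. (a,b) \<in> ballot Q i} = {}" "{i\<in>voters Q. (b,a) \<in> ballot Q i} = {}" by blast+
      show ?thesis unfolding margin_def E by simp
    qed
  qed
  then show ?case using FQ' PQ' Q cQ cnt by (intro exI[of _ Q']) (auto simp: Q'_def)
qed

lemma build_Pstar:
  assumes ni: "neutral_indifference F" and nr: "neutral_reversal F" and inf: "infinite (UNIV :: 'v set)"
    and P: "profile (Pr :: ('v,'c) prof)"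
  shows "\<exists>Ps. profile Ps \<and> cands Ps = cands Pr \<and> F Ps = F Pr \<and> margin Ps = margin Pr \<and>
     (\<forall>a\<in>cands Pr. \<forall>b\<in>cands Pr. a \<noteq> b \<longrightarrow>
        card (voters Pr) \<le> card {i\<in>voters Ps. (a,b) \<in> ballot Ps i} \<and>
        card {i\<in>voters Ps. (a,b) \<in> ballot Ps i} \<le> 2 * card (voters Pr)) \<and>
     N \<le> card {i\<in>voters Ps. ballot Ps i = {}}"
proof -
  have fC: "finite (cands Pr)" and fV: "finite (voters Pr)" using P unfolding profile_def by auto
  obtain f :: "'c \<Rightarrow> nat" where f: "inj_on f (cands Pr)"
    using finite_imp_inj_to_nat_seg[OF fC] by blast
  define L where "L = sballot (cands Pr) f"
  have L: "strict_weak_order (cands Pr) L" unfolding L_def by (rule swo_sballot)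
  have Lt: "\<forall>a\<in>cands Pr. \<forall>b\<in>cands Pr. a \<noteq> b \<longrightarrow> (a,b) \<in> L \<or> (b,a) \<in> L"
    using f unfolding L_def sballot_def inj_on_def by (metis (mono_tags, lifting) case_prodI linorder_neqE_nat mem_Collect_eq)
  obtain Q where Q: "profile Q" "cands Q = cands Pr" "F Q = F Pr" "margin Q = margin Pr"
    and cQ: "\<forall>a\<in>cands Pr. \<forall>b\<in>cands Pr. a \<noteq> b \<longrightarrow>
        card {i\<in>voters Q. (a,b) \<in> ballot Q i} = card {i\<in>voters Pr. (a,b) \<in> ballot Pr i} + card (voters Pr)"
    using add_pairs[OF nr inf P L Lt, of "card (voters Pr)"] by blast
  have fQ: "finite (voters Q)" using Q unfolding profile_def by auto
  have "infinite (UNIV - voters Q)" using Diff_infinite_finite[OF fQ inf] .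
  then obtain E where E: "finite E" "card E = N" "E \<subseteq> UNIV - voters Q"
    using infinite_arbitrarily_large by blast
  have EQ: "E \<inter> voters Q = {}" using E by auto
  define Ps where "Ps = (voters Q \<union> E, cands Q, ballot Q)"
  have PsP: "profile Ps" "F Ps = F Pr" using add_empties[OF ni Q(1) E(1) EQ] Q unfolding Ps_def by auto
  have Eb: "ballot Q i = {}" if "i \<in> E" for i using Q(1) that EQ unfolding profile_def by auto
  have cs: "{i\<in>voters Ps. (a,b) \<in> ballot Ps i} = {i\<in>voters Q. (a,b) \<in> ballot Q i}" for a b
    unfolding Ps_def using Eb by auto
  have mPs: "margin Ps = margin Pr" using cs Q(4) unfolding margin_def[abs_def] by simp
  have bnd: "card (voters Pr) \<le> card {i\<in>voters Ps. (a,b) \<in> ballot Ps i} \<and>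
        card {i\<in>voters Ps. (a,b) \<in> ballot Ps i} \<le> 2 * card (voters Pr)"
    if "a \<in> cands Pr" "b \<in> cands Pr" "a \<noteq> b" for a b
  proof -
    have "card {i\<in>voters Pr. (a,b) \<in> ballot Pr i} \<le> card (voters Pr)"
      using fV by (intro card_mono) auto
    then show ?thesis using cQ that unfolding cs by auto
  qed
  have "E \<subseteq> {i\<in>voters Ps. ballot Ps i = {}}" using Eb unfolding Ps_def by auto
  moreover have "finite (voters Ps)" using PsP unfolding profile_def by auto
  ultimately have "N \<le> card {i\<in>voters Ps. ballot Ps i = {}}"
    using E(2) by (metis (no_types, lifting) card_mono finite_subset mem_Collect_eq subsetI)
  then show ?thesis using PsP mPs bnd Q(2) by (intro exI[of _ Ps]) (auto simp: Ps_def)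
qed



lemma assign:
  assumes "finite A" "finite D" "e \<notin> D" "(\<Sum>t\<in>D. d t) \<le> card A"
  shows "\<exists>\<tau>. (\<forall>i\<in>A. \<tau> i \<in> insert e D) \<and> (\<forall>t\<in>D. card {i\<in>A. \<tau> i = t} = d t) \<and>
              card {i\<in>A. \<tau> i = e} = card A - (\<Sum>t\<in>D. d t)"
  using assms(2,1,3,4)
proof (induction D arbitrary: A rule: finite_induct)
  case empty
  then show ?case by (intro exI[of _ "\<lambda>_. e"]) auto
next
  case (insert t D)
  have "d t \<le> card A" using insert by simp
  then obtain S where S: "S \<subseteq> A" "card S = d t" "finite S"
    using obtain_subset_with_card_n by metis
  have cA: "card (A - S) = card A - d t" using S insert(4) by (simp add: card_Diff_subset)
  have "(\<Sum>t\<in>D. d t) \<le> card (A - S)" using insert cA by simp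
  then obtain \<tau>0 where t0: "\<forall>i\<in>A - S. \<tau>0 i \<in> insert e D" "\<forall>t\<in>D. card {i\<in>A - S. \<tau>0 i = t} = d t"
    "card {i\<in>A - S. \<tau>0 i = e} = card (A - S) - (\<Sum>t\<in>D. d t)"
    using insert.IH[of "A - S"] insert by auto
  define \<tau> where "\<tau> i = (if i \<in> S then t else \<tau>0 i)" for i
  have e1: "{i\<in>A. \<tau> i = t} = S" using S t0(1) insert(2,5) unfolding \<tau>_def by auto
  have e2: "{i\<in>A. \<tau> i = t'} = {i\<in>A - S. \<tau>0 i = t'}" if "t' \<noteq> t" for t'
    using that unfolding \<tau>_def by auto
  have te: "t \<noteq> e" using insert by auto
  have p1: "\<forall>i\<in>A. \<tau> i \<in> insert e (insert t D)" using t0(1) unfolding \<tau>_def by auto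
  have p2: "\<forall>t'\<in>insert t D. card {i\<in>A. \<tau> i = t'} = d t'"
  proof
    fix t' assume "t' \<in> insert t D"
    then show "card {i\<in>A. \<tau> i = t'} = d t'"
      using e1 e2[of t'] S t0(2) insert(2) by (cases "t' = t") auto
  qed
  have p3: "card {i\<in>A. \<tau> i = e} = card A - (\<Sum>t\<in>insert t D. d t)"
    using e2[of e] te t0(3) cA insert(1,2) by simp
  show ?case using p1 p2 p3 by blast
qed

lemma card_by_type:
  assumes "finite V" "\<tau> ` V \<subseteq> T" "finite T"
  shows "card {i\<in>V. Q (\<tau> i)} = (\<Sum>t\<in>{t\<in>T. Q t}. card {i\<in>V. \<tau> i = t})"
proof -
  have "{i\<in>V. Q (\<tau> i)} = (\<Union>t\<in>{t\<in>T. Q t}. {i\<in>V. \<tau> i = t})" using assms(2) by auto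
  moreover have "card (\<Union>t\<in>{t\<in>T. Q t}. {i\<in>V. \<tau> i = t}) = (\<Sum>t\<in>{t\<in>T. Q t}. card {i\<in>V. \<tau> i = t})"
    using assms by (intro card_UN_disjoint) auto
  ultimately show ?thesis by simp
qed

datatype ty = Zt nat | Tt nat | Et

locale cyc =
  fixes n :: nat and a :: "nat \<Rightarrow> 'c"
  assumes n3: "3 \<le> n" and ainj: "inj_on a {..<n}"
begin

definition nx :: "nat \<Rightarrow> nat" where "nx u = (if Suc u = n then 0 else Suc u)"
definition pr :: "nat \<Rightarrow> nat" where "pr u = (if u = 0 then n - 1 else u - 1)"

lemma nx_lt: "u < n \<Longrightarrow> nx u < n" unfolding nx_def using n3 by auto
lemma pr_lt: "u < n \<Longrightarrow> pr u < n" unfolding pr_def using n3 by auto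
lemma nx_pr: "u < n \<Longrightarrow> nx (pr u) = u" unfolding nx_def pr_def using n3 by auto
lemma pr_nx: "u < n \<Longrightarrow> pr (nx u) = u" unfolding nx_def pr_def using n3 by auto
lemma nx_inj: "u < n \<Longrightarrow> v < n \<Longrightarrow> nx u = nx v \<longleftrightarrow> u = v" by (metis pr_nx)
lemma nx_eq: "j < n \<Longrightarrow> u < n \<Longrightarrow> nx j = u \<longleftrightarrow> j = pr u" by (metis nx_pr pr_nx)
lemma nx_neq: "u < n \<Longrightarrow> nx u \<noteq> u" unfolding nx_def using n3 by auto
lemma pr_neq: "u < n \<Longrightarrow> pr u \<noteq> u" unfolding pr_def using n3 by auto
lemma nx_nx_neq: "u < n \<Longrightarrow> nx (nx u) \<noteq> u" unfolding nx_def using n3 by auto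

definition scr :: "ty \<Rightarrow> nat \<Rightarrow> nat" where
  "scr t u = (case t of Zt j \<Rightarrow> if u = j then 2 else if u = nx j then 1 else 0
                     | Tt j \<Rightarrow> if u = j then 1 else 0 | Et \<Rightarrow> 0)"

definition vty :: "ty set" where "vty = Zt ` {..<n} \<union> Tt ` {..<n} \<union> {Et}"

lemma finite_vty: "finite vty" unfolding vty_def by auto

definition rot :: "ty \<Rightarrow> ty" where
  "rot t = (case t of Zt j \<Rightarrow> Zt (nx j) | Tt j \<Rightarrow> Tt (nx j) | Et \<Rightarrow> Et)"

lemma rot_vty: "t \<in> vty \<Longrightarrow> rot t \<in> vty" unfolding vty_def rot_def using nx_lt by auto

lemma scr_rot: "t \<in> vty \<Longrightarrow> u < n \<Longrightarrow> scr (rot t) (nx u) = scr t u"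
  unfolding vty_def rot_def scr_def using nx_inj nx_lt by (auto split: ty.splits)

lemma better_set:
  assumes "u < n" "v < n" "u \<noteq> v"
  shows "{t\<in>vty. scr t v < scr t u} = {Zt u, Tt u} \<union> (if v = pr u then {} else {Zt (pr u)})"
proof -
  have "scr t v < scr t u \<longleftrightarrow> t \<in> {Zt u, Tt u} \<union> (if v = pr u then {} else {Zt (pr u)})"
    if tv: "t \<in> vty" for t
  proof (cases t)
    case (Zt j)
    then have j: "j < n" using tv unfolding vty_def by auto
    have q: "nx j = u \<longleftrightarrow> j = pr u" using nx_eq[OF j assms(1)] .
    show ?thesis
    proof (cases "j = u")
      case True
      then show ?thesis using Zt assms(3) unfolding scr_def by auto
    next
      case False
      then show ?thesis using Zt assms(3) q unfolding scr_def by auto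
    qed
  next
    case (Tt j)
    then show ?thesis using assms(3) unfolding scr_def by auto
  next
    case Et
    then show ?thesis unfolding scr_def by auto
  qed
  moreover have "{Zt u, Tt u} \<union> (if v = pr u then {} else {Zt (pr u)}) \<subseteq> vty"
    unfolding vty_def using assms pr_lt by auto
  ultimately show ?thesis by blast
qed

definition C :: "'c set" where "C = a ` {..<n}"

definition idx :: "'c \<Rightarrow> nat" where "idx c = inv_into {..<n} a c"

lemma idx_a: "u < n \<Longrightarrow> idx (a u) = u" unfolding idx_def using ainj by (simp add: inv_into_f_f)

definition tball :: "ty \<Rightarrow> ('c \<times> 'c) set" where
  "tball t = sballot C (\<lambda>c. scr t (idx c))"

lemma swo_tball: "strict_weak_order C (tball t)" unfolding tball_def by (rule swo_sballot)

lemma tball_mem: "u < n \<Longrightarrow> v < n \<Longrightarrow> (a u, a v) \<in> tball t \<longleftrightarrow> scr t v < scr t u"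
  unfolding tball_def sballot_def C_def by (auto simp: idx_a)

lemma tball_sub: "tball t \<subseteq> C \<times> C" unfolding tball_def sballot_def by auto

end



lemma swo_pair:
  assumes "strict_weak_order X R" "x \<in> X" "y \<in> X" "x \<noteq> y"
  shows "R \<inter> {x,y} \<times> {x,y} = (if (x,y) \<in> R then {(x,y)} else {}) \<union> (if (y,x) \<in> R then {(y,x)} else {})"
  using swo_irrefl[OF assms(1)] by auto

context cyc begin

lemma C_fin: "finite C" unfolding C_def by auto
lemma aC: "u < n \<Longrightarrow> a u \<in> C" unfolding C_def by auto
lemma C_ne: "C \<noteq> {}" using aC[of 0] n3 by auto

lemma xy_iff: "(a (n-1), a 0) \<in> tball t \<longleftrightarrow> scr t 0 < scr t (n-1)"
  using tball_mem[of "n-1" 0] n3 by auto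
lemma yx_iff: "(a 0, a (n-1)) \<in> tball t \<longleftrightarrow> scr t (n-1) < scr t 0"
  using tball_mem[of 0 "n-1"] n3 by auto

lemma nx_last: "nx (n - 1) = 0" unfolding nx_def using n3 by auto

lemma xy_in: "t \<in> {Zt (n-1), Zt (n-2), Tt (n-1)} \<Longrightarrow> (a (n-1), a 0) \<in> tball t \<and> (a 0, a (n-1)) \<notin> tball t"
  unfolding xy_iff yx_iff using n3 by (auto simp: scr_def nx_def split: if_splits)

lemma yx_in: "t \<in> {Zt 0, Tt 0} \<Longrightarrow> (a 0, a (n-1)) \<in> tball t \<and> (a (n-1), a 0) \<notin> tball t"
  unfolding xy_iff yx_iff using n3 by (auto simp: scr_def nx_def split: if_splits)

lemma tie_in: "t \<in> Zt ` {1..n-3} \<union> Tt ` {1..n-2} \<union> {Et} \<Longrightarrow> (a 0, a (n-1)) \<notin> tball t \<and> (a (n-1), a 0) \<notin> tball t"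
  unfolding xy_iff yx_iff using n3 by (auto simp: scr_def nx_def split: if_splits)

definition \<rho> :: "'c \<Rightarrow> 'c" where "\<rho> c = a (nx (idx c))"

lemma rho_a: "u < n \<Longrightarrow> \<rho> (a u) = a (nx u)" unfolding \<rho>_def by (simp add: idx_a)

lemma rho_bij: "bij_betw \<rho> C C"
proof -
  have "inj_on \<rho> C"
  proof (rule inj_onI)
    fix c d assume "c \<in> C" "d \<in> C" "\<rho> c = \<rho> d"
    then obtain u v where uv: "u < n" "v < n" "c = a u" "d = a v" "a (nx u) = a (nx v)"
      unfolding C_def using rho_a by auto
    then have "nx u = nx v" using ainj nx_lt unfolding inj_on_def by auto
    then show "c = d" using uv nx_inj by auto
  qed
  moreover have "\<rho> ` C = C"
  proof
    show "\<rho> ` C \<subseteq> C" unfolding C_def using rho_a nx_lt by auto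
    show "C \<subseteq> \<rho> ` C"
    proof
      fix c assume "c \<in> C"
      then obtain u where u: "u < n" "c = a u" unfolding C_def by auto
      then have "c = \<rho> (a (pr u))" using rho_a pr_lt nx_pr by auto
      then show "c \<in> \<rho> ` C" using aC pr_lt u by auto
    qed
  qed
  ultimately show ?thesis unfolding bij_betw_def by auto
qed

lemma rot_tball:
  assumes t: "t \<in> vty"
  shows "map_prod \<rho> \<rho> ` tball t = tball (rot t)"
proof
  show "map_prod \<rho> \<rho> ` tball t \<subseteq> tball (rot t)"
  proof
    fix p assume "p \<in> map_prod \<rho> \<rho> ` tball t"
    then obtain c d where cd: "(c,d) \<in> tball t" "p = (\<rho> c, \<rho> d)" by auto
    then obtain u v where uv: "u < n" "v < n" "c = a u" "d = a v"
      using tball_sub unfolding C_def by blast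
    have "scr t v < scr t u" using cd uv tball_mem by auto
    then show "p \<in> tball (rot t)" using cd uv tball_mem nx_lt scr_rot[OF t] rho_a by auto
  qed
  show "tball (rot t) \<subseteq> map_prod \<rho> \<rho> ` tball t"
  proof
    fix p assume p: "p \<in> tball (rot t)"
    then obtain u v where uv: "u < n" "v < n" "p = (a u, a v)"
      using tball_sub unfolding C_def by blast
    have "scr (rot t) v < scr (rot t) u" using p uv tball_mem by auto
    then have "scr t (pr v) < scr t (pr u)" using scr_rot[OF t, of "pr u"] scr_rot[OF t, of "pr v"]
      nx_pr pr_lt uv by auto
    then have "(a (pr u), a (pr v)) \<in> tball t" using tball_mem pr_lt uv by auto
    moreover have "p = map_prod \<rho> \<rho> (a (pr u), a (pr v))" using uv rho_a pr_lt nx_pr by auto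
    ultimately show "p \<in> map_prod \<rho> \<rho> ` tball t" by blast
  qed
qed

lemma rot_inj: "inj_on rot vty"
  unfolding inj_on_def vty_def rot_def using nx_inj by auto

lemma rot_surj: "rot ` vty = vty"
proof
  show "rot ` vty \<subseteq> vty" using rot_vty by auto
  show "vty \<subseteq> rot ` vty"
  proof
    fix t assume t: "t \<in> vty"
    show "t \<in> rot ` vty"
    proof (cases t)
      case (Zt j)
      then have "j < n" using t unfolding vty_def by auto
      then have "t = rot (Zt (pr j))" "Zt (pr j) \<in> vty" using Zt nx_pr pr_lt unfolding rot_def vty_def by auto
      then show ?thesis by blast
    next
      case (Tt j)
      then have "j < n" using t unfolding vty_def by auto
      then have "t = rot (Tt (pr j))" "Tt (pr j) \<in> vty" using Tt nx_pr pr_lt unfolding rot_def vty_def by auto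
      then show ?thesis by blast
    next
      case Et
      then have "t = rot Et" "Et \<in> vty" unfolding rot_def vty_def by auto
      then show ?thesis by blast
    qed
  qed
qed

end



context cyc begin

lemma cycle_main:
  fixes Ps :: "('v,'c) prof" and m :: nat and F :: "('v,'c) prof \<Rightarrow> 'c set"
  assumes vs: "VSCC F" and an: "anonymity F" and ne: "neutrality F"
    and P: "profile Ps" and CP: "C \<subseteq> cands Ps"
    and cX: "card {i\<in>voters Ps. (a (n-1), a 0) \<in> ballot Ps i} = card {i\<in>voters Ps. (a 0, a (n-1)) \<in> ballot Ps i} + m"
    and mY: "m \<le> card {i\<in>voters Ps. (a 0, a (n-1)) \<in> ballot Ps i}"
    and cT: "(n-2) * card {i\<in>voters Ps. (a 0, a (n-1)) \<in> ballot Ps i} \<le>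
             card {i\<in>voters Ps. (a (n-1), a 0) \<notin> ballot Ps i \<and> (a 0, a (n-1)) \<notin> ballot Ps i}"
  shows "\<exists>P2. profile P2 \<and> voters P2 = voters Ps \<and> cands P2 = C \<and>
     (\<forall>i. ballot P2 i \<inter> {a (n-1), a 0} \<times> {a (n-1), a 0} = ballot Ps i \<inter> {a (n-1), a 0} \<times> {a (n-1), a 0}) \<and>
     (\<forall>u<n. \<forall>v<n. margin P2 (a u) (a v) = (if v = nx u then int m else if u = nx v then - int m else 0)) \<and>
     a 0 \<in> F P2"
proof -
  let ?V = "voters Ps" and ?B = "ballot Ps" and ?x = "a (n-1)" and ?y = "a 0"
  define GX where "GX = {i\<in>?V. (?x, ?y) \<in> ?B i}"
  define GY where "GY = {i\<in>?V. (?y, ?x) \<in> ?B i}"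
  define GT where "GT = {i\<in>?V. (?x, ?y) \<notin> ?B i \<and> (?y, ?x) \<notin> ?B i}"
  have fin: "finite ?V" and Vne: "?V \<noteq> {}" using P unfolding profile_def by auto
  have sw: "strict_weak_order (cands Ps) (?B i)" if "i \<in> ?V" for i using P that unfolding profile_def by auto
  have Bout: "?B i = {}" if "i \<notin> ?V" for i using P that unfolding profile_def by auto
  have finG: "finite GX" "finite GY" "finite GT" using fin unfolding GX_def GY_def GT_def by auto
  have disj: "GX \<inter> GY = {}" unfolding GX_def GY_def using sw swo_asym by fastforce
  have Vun: "?V = GY \<union> GX \<union> GT" unfolding GX_def GY_def GT_def by auto
  have n1: "n - 1 \<noteq> n - 2" "n - 2 \<noteq> 0" "n - 1 \<noteq> 0" using n3 by auto
  have xy: "?x \<noteq> ?y"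
  proof
    assume "?x = ?y"
    moreover have "n - 1 \<in> {..<n}" "0 \<in> {..<n}" using n3 by auto
    ultimately have "n - 1 = 0" using inj_onD[OF ainj] by blast
    then show False using n3 by simp
  qed
  define c where "c = card GY - m"
  have mY': "m \<le> card GY" using mY unfolding GY_def .
  have cX': "card GX = card GY + m" using cX unfolding GX_def GY_def .
  obtain \<tau>Y where tY: "\<forall>i\<in>GY. \<tau>Y i \<in> {Tt 0, Zt 0}" "card {i\<in>GY. \<tau>Y i = Zt 0} = m"
    "card {i\<in>GY. \<tau>Y i = Tt 0} = c"
    using assign[of GY "{Zt 0}" "Tt 0" "\<lambda>_. m"] finG mY' unfolding c_def by auto
  obtain \<tau>X where tX: "\<forall>i\<in>GX. \<tau>X i \<in> {Tt (n-1), Zt (n-1), Zt (n-2)}"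
    "card {i\<in>GX. \<tau>X i = Zt (n-1)} = m" "card {i\<in>GX. \<tau>X i = Zt (n-2)} = m"
    "card {i\<in>GX. \<tau>X i = Tt (n-1)} = c"
    using assign[of GX "{Zt (n-1), Zt (n-2)}" "Tt (n-1)" "\<lambda>_. m"] finG mY' cX' n1 unfolding c_def by auto
  define DT where "DT = Zt ` {1..n-3} \<union> Tt ` {1..n-2}"
  define dT where "dT t = (case t of Zt _ \<Rightarrow> m | Tt _ \<Rightarrow> c | Et \<Rightarrow> 0)" for t
  have sumDT: "(\<Sum>t\<in>DT. dT t) = m * (n-3) + c * (n-2)"
  proof -
    have "(\<Sum>t\<in>DT. dT t) = (\<Sum>t\<in>Zt ` {1..n-3}. dT t) + (\<Sum>t\<in>Tt ` {1..n-2}. dT t)"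
      unfolding DT_def by (rule sum.union_disjoint) auto
    also have "(\<Sum>t\<in>Zt ` {1..n-3}. dT t) = (\<Sum>j\<in>{1..n-3}. dT (Zt j))"
      by (rule sum.reindex_cong[of Zt]) (auto simp: inj_on_def)
    also have "(\<Sum>t\<in>Tt ` {1..n-2}. dT t) = (\<Sum>j\<in>{1..n-2}. dT (Tt j))"
      by (rule sum.reindex_cong[of Tt]) (auto simp: inj_on_def)
    finally show ?thesis unfolding dT_def using n3 by simp
  qed
  have "m * (n-3) + c * (n-2) \<le> (m + c) * (n-2)"
    by (simp add: add_mult_distrib diff_le_mono2)
  also have "(m + c) = card GY" unfolding c_def using mY' by simp
  also have "card GY * (n-2) \<le> card GT" using cT unfolding GY_def GT_def by (simp add: mult.commute)
  finally have sT: "(\<Sum>t\<in>DT. dT t) \<le> card GT" using sumDT by simp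
  obtain \<tau>T where tT: "\<forall>i\<in>GT. \<tau>T i \<in> insert Et DT" "\<forall>t\<in>DT. card {i\<in>GT. \<tau>T i = t} = dT t"
  proof -
    have "finite DT" "Et \<notin> DT" unfolding DT_def by auto
    from assign[OF finG(3) this sT] show ?thesis using that by blast
  qed
  define \<tau> where "\<tau> i = (if i \<in> GY then \<tau>Y i else if i \<in> GX then \<tau>X i else \<tau>T i)" for i
  define cnt where "cnt t = card {i\<in>?V. \<tau> i = t}" for t
  have cnt_split: "cnt t = card {i\<in>GY. \<tau>Y i = t} + card {i\<in>GX. \<tau>X i = t} + card {i\<in>GT. \<tau>T i = t}" for t
  proof -
    have "{i\<in>?V. \<tau> i = t} = ({i\<in>GY. \<tau>Y i = t} \<union> {i\<in>GX. \<tau>X i = t}) \<union> {i\<in>GT. \<tau>T i = t}"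
      unfolding \<tau>_def using Vun disj unfolding GT_def GX_def GY_def by auto
    moreover have "card (({i\<in>GY. \<tau>Y i = t} \<union> {i\<in>GX. \<tau>X i = t}) \<union> {i\<in>GT. \<tau>T i = t}) =
       card {i\<in>GY. \<tau>Y i = t} + card {i\<in>GX. \<tau>X i = t} + card {i\<in>GT. \<tau>T i = t}"
    proof -
      let ?A1 = "{i\<in>GY. \<tau>Y i = t}" and ?A2 = "{i\<in>GX. \<tau>X i = t}" and ?A3 = "{i\<in>GT. \<tau>T i = t}"
      have f: "finite ?A1" "finite ?A2" "finite ?A3" using finG by auto
      have d1: "?A1 \<inter> ?A2 = {}" using disj by auto
      have d2: "(?A1 \<union> ?A2) \<inter> ?A3 = {}" unfolding GT_def GX_def GY_def by auto
      show ?thesis using card_Un_disjoint[OF _ f(3) d2] card_Un_disjoint[OF f(1,2) d1] f by simp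
    qed
    ultimately show ?thesis unfolding cnt_def by simp
  qed
  have cY: "card {i\<in>GY. \<tau>Y i = t} = (if t = Zt 0 then m else if t = Tt 0 then c else 0)" for t
  proof -
    have E: "t \<noteq> Zt 0 \<Longrightarrow> t \<noteq> Tt 0 \<Longrightarrow> {i\<in>GY. \<tau>Y i = t} = {}" using tY(1) by auto
    have "t \<noteq> Zt 0 \<Longrightarrow> t \<noteq> Tt 0 \<Longrightarrow> card {i\<in>GY. \<tau>Y i = t} = 0"
      by (drule E, assumption) (simp only: card.empty)
    then show ?thesis using tY by auto
  qed
  have cXX: "card {i\<in>GX. \<tau>X i = t} = (if t = Zt (n-1) then m else if t = Zt (n-2) then m else if t = Tt (n-1) then c else 0)" for t
  proof -
    have E: "t \<noteq> Zt (n-1) \<Longrightarrow> t \<noteq> Zt (n-2) \<Longrightarrow> t \<noteq> Tt (n-1) \<Longrightarrow> {i\<in>GX. \<tau>X i = t} = {}" using tX(1) by auto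
    have "t \<noteq> Zt (n-1) \<Longrightarrow> t \<noteq> Zt (n-2) \<Longrightarrow> t \<noteq> Tt (n-1) \<Longrightarrow> card {i\<in>GX. \<tau>X i = t} = 0"
      by (drule E, assumption, assumption) (simp only: card.empty)
    then show ?thesis using tX n1 by auto
  qed
  have cTT: "card {i\<in>GT. \<tau>T i = t} = (if t \<in> Zt ` {1..n-3} then m else if t \<in> Tt ` {1..n-2} then c else 0)"
    if "t \<noteq> Et" for t
  proof -
    have E: "t \<notin> DT \<Longrightarrow> {i\<in>GT. \<tau>T i = t} = {}" using tT(1) that by auto
    have "t \<notin> DT \<Longrightarrow> card {i\<in>GT. \<tau>T i = t} = 0"
      by (drule E) (simp only: card.empty)
    then show ?thesis using tT(2) unfolding DT_def dT_def by (auto split: ty.splits)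
  qed
  have cntZ: "cnt (Zt j) = m" if "j < n" for j
    unfolding cnt_split cY cXX cTT[of "Zt j", simplified] using that n3 by auto
  have cntT: "cnt (Tt j) = c" if "j < n" for j
    unfolding cnt_split cY cXX cTT[of "Tt j", simplified] using that n3 by auto
  have tv: "\<tau> i \<in> vty" if iV: "i \<in> ?V" for i
  proof -
    consider "i \<in> GY" | "i \<notin> GY" "i \<in> GX" | "i \<notin> GY" "i \<notin> GX" "i \<in> GT" using iV unfolding GT_def GX_def GY_def by blast
    then show ?thesis
    proof cases
      case 1 then show ?thesis using tY(1) n3 unfolding \<tau>_def vty_def by auto
    next
      case 2 then show ?thesis using tX(1) n3 unfolding \<tau>_def vty_def by auto
    next
      case 3
      then have "\<tau>T i \<in> insert Et DT" using tT(1) by auto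
      then show ?thesis using 3 n3 unfolding \<tau>_def vty_def DT_def by (auto simp: image_iff)
    qed
  qed
  have cnt_rot: "cnt (rot t) = cnt t" if "t \<in> vty" for t
    using that cntZ cntT nx_lt unfolding vty_def rot_def by auto
  have fib: "card {i\<in>?V. rot (\<tau> i) = t} = card {i\<in>?V. \<tau> i = t}" for t
  proof (cases "t \<in> vty")
    case True
    then obtain t' where t': "t' \<in> vty" "t = rot t'" using rot_surj by blast
    have "{i\<in>?V. rot (\<tau> i) = t} = {i\<in>?V. \<tau> i = t'}"
      using t' tv inj_onD[OF rot_inj] by auto
    then show ?thesis using cnt_rot[OF t'(1)] t'(2) unfolding cnt_def by simp
  next
    case False
    then have E1: "{i\<in>?V. rot (\<tau> i) = t} = {}" "{i\<in>?V. \<tau> i = t} = {}"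
      using tv rot_vty by auto
    show ?thesis by (simp only: E1)
  qed
  obtain \<sigma> where sb: "bij_betw \<sigma> ?V ?V" and se: "\<forall>i\<in>?V. rot (\<tau> i) = \<tau> (\<sigma> i)"
    using fiber_bij[OF fin fib] by blast
  define P2 where "P2 = (?V, C, \<lambda>i. if i \<in> ?V then tball (\<tau> i) else {})"
  have P2s: "voters P2 = ?V" "cands P2 = C" "\<And>i. i \<in> ?V \<Longrightarrow> ballot P2 i = tball (\<tau> i)"
    unfolding P2_def by auto
  have prof2: "profile P2" unfolding profile_def P2_def using fin Vne C_fin C_ne swo_tball by auto
  have xC: "?x \<in> cands Ps" "?y \<in> cands Ps" using CP aC n3 by auto
  have xC2: "?x \<in> C" "?y \<in> C" using aC n3 by auto
  have restr: "ballot P2 i \<inter> {?x, ?y} \<times> {?x, ?y} = ?B i \<inter> {?x, ?y} \<times> {?x, ?y}" for i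
  proof (cases "i \<in> ?V")
    case False
    then show ?thesis using Bout unfolding P2_def by auto
  next
    case True
    have e1: "?B i \<inter> {?x, ?y} \<times> {?x, ?y} = (if (?x,?y) \<in> ?B i then {(?x,?y)} else {}) \<union> (if (?y,?x) \<in> ?B i then {(?y,?x)} else {})"
      using swo_pair[OF sw[OF True] xC xy] .
    have e2: "ballot P2 i \<inter> {?x, ?y} \<times> {?x, ?y} = (if (?x,?y) \<in> ballot P2 i then {(?x,?y)} else {}) \<union> (if (?y,?x) \<in> ballot P2 i then {(?y,?x)} else {})"
      using swo_pair[OF swo_tball xC2 xy] P2s(3)[OF True] by simp
    have "((?x,?y) \<in> ballot P2 i \<longleftrightarrow> (?x,?y) \<in> ?B i) \<and> ((?y,?x) \<in> ballot P2 i \<longleftrightarrow> (?y,?x) \<in> ?B i)"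
    proof -
      consider "i \<in> GY" | "i \<notin> GY" "i \<in> GX" | "i \<notin> GY" "i \<notin> GX" "i \<in> GT" using True unfolding GT_def GX_def GY_def by blast
      then show ?thesis
      proof cases
        case 1
        then have "\<tau> i \<in> {Zt 0, Tt 0}" using tY(1) unfolding \<tau>_def by auto
        then show ?thesis using yx_in[of "\<tau> i"] 1 P2s(3)[OF True] swo_asym[OF sw[OF True]] unfolding GY_def by auto
      next
        case 2
        then have "\<tau> i \<in> {Zt (n-1), Zt (n-2), Tt (n-1)}" using tX(1) unfolding \<tau>_def by auto
        then show ?thesis using xy_in[of "\<tau> i"] 2 P2s(3)[OF True] swo_asym[OF sw[OF True]] unfolding GX_def by auto
      next
        case 3
        then have "\<tau> i \<in> Zt ` {1..n-3} \<union> Tt ` {1..n-2} \<union> {Et}" using tT(1) unfolding \<tau>_def DT_def by auto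
        then show ?thesis using tie_in[of "\<tau> i"] 3 P2s(3)[OF True] unfolding GT_def by auto
      qed
    qed
    then show ?thesis unfolding e1 e2 by simp
  qed
  have mcount: "card {i\<in>?V. (a u, a v) \<in> ballot P2 i} = m + c + (if v = pr u then 0 else m)"
    if uv: "u < n" "v < n" "u \<noteq> v" for u v
  proof -
    have "{i\<in>?V. (a u, a v) \<in> ballot P2 i} = {i\<in>?V. scr (\<tau> i) v < scr (\<tau> i) u}"
      using P2s(3) tball_mem uv by auto
    also have "card \<dots> = (\<Sum>t\<in>{t\<in>vty. scr t v < scr t u}. cnt t)"
      unfolding cnt_def by (rule card_by_type[OF fin _ finite_vty]) (use tv in auto)
    also have "{t\<in>vty. scr t v < scr t u} = {Zt u, Tt u} \<union> (if v = pr u then {} else {Zt (pr u)})"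
      by (rule better_set[OF uv])
    also have "(\<Sum>t\<in>{Zt u, Tt u} \<union> (if v = pr u then {} else {Zt (pr u)}). cnt t) = m + c + (if v = pr u then 0 else m)"
    proof (cases "v = pr u")
      case True then show ?thesis using cntZ cntT uv by simp
    next
      case False
      have "Zt (pr u) \<notin> {Zt u, Tt u}" using pr_neq uv by auto
      then show ?thesis using False cntZ cntT pr_lt uv by simp
    qed
    finally show ?thesis .
  qed
  have marg: "margin P2 (a u) (a v) = (if v = nx u then int m else if u = nx v then - int m else 0)"
    if uv: "u < n" "v < n" for u v
  proof (cases "u = v")
    case True then show ?thesis using nx_neq[of v] uv by auto
  next
    case False
    have e1: "v = nx u \<longleftrightarrow> u = pr v" using nx_eq[of u v] uv by auto
    have e2: "u = nx v \<longleftrightarrow> v = pr u" using nx_eq[of v u] uv by auto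
    have e3: "\<not> (v = nx u \<and> u = nx v)" using nx_nx_neq[of u] uv by auto
    have m1: "card {i\<in>voters P2. (a u, a v) \<in> ballot P2 i} = m + c + (if v = pr u then 0 else m)"
      using mcount[OF uv False] P2s(1) by simp
    have m2: "card {i\<in>voters P2. (a v, a u) \<in> ballot P2 i} = m + c + (if u = pr v then 0 else m)"
      using mcount[of v u] uv False P2s(1) by simp
    show ?thesis unfolding margin_def m1 m2 using e1 e2 e3 by auto
  qed
  have img: "\<forall>i\<in>voters P2. {(\<rho> c, \<rho> d) | c d. (c,d) \<in> ballot P2 i} = ballot P2 (\<sigma> i)"
  proof
    fix i assume i0: "i \<in> voters P2"
    then have i: "i \<in> ?V" using P2s(1) by simp
    have si: "\<sigma> i \<in> ?V" using bij_betw_apply[OF sb i] .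
    show "{(\<rho> c, \<rho> d) | c d. (c,d) \<in> ballot P2 i} = ballot P2 (\<sigma> i)"
      unfolding setimg using P2s(3)[OF i] P2s(3)[OF si] rot_tball[OF tv[OF i]] se i by simp
  qed
  have rb: "bij_betw \<rho> (cands P2) (cands P2)" using rho_bij P2s(2) by simp
  have sb2: "bij_betw \<sigma> (voters P2) (voters P2)" using sb P2s(1) by simp
  have closed: "c \<in> F P2 \<longleftrightarrow> \<rho> c \<in> F P2" if "c \<in> C" for c
    using sym_closed[OF an ne prof2 rb sb2 img] that P2s(2) by simp
  have FP: "F P2 \<noteq> {}" "F P2 \<subseteq> C" using vs[unfolded VSCC_def, rule_format, OF prof2] P2s(2) by auto
  then obtain c0 where "c0 \<in> F P2" "c0 \<in> C" by auto
  then obtain u where u: "u < n" "a u \<in> F P2" unfolding C_def by auto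
  have step: "a (nx w) \<in> F P2" if "a w \<in> F P2" "w < n" for w
    using closed[of "a w"] aC[OF that(2)] rho_a[OF that(2)] that(1) by simp
  have up: "a (u + d) \<in> F P2" if "u + d < n" for d
    using that
  proof (induction d)
    case 0 then show ?case using u by simp
  next
    case (Suc d)
    then have "a (nx (u + d)) \<in> F P2" using step by simp
    moreover have "nx (u + d) = u + Suc d" using Suc.prems unfolding nx_def by auto
    ultimately show ?case by simp
  qed
  have "a (n - 1) \<in> F P2" using up[of "n - 1 - u"] u(1) by simp
  then have a0: "a 0 \<in> F P2" using step[of "n - 1"] nx_last n3 by simp
  show ?thesis using prof2 P2s restr marg a0 by (intro exI[of _ P2]) auto
qed

end



lemma strength_le:
  assumes "k < length p - 1"
  shows "path_strength Pr p \<le> margin Pr (p ! k) (p ! Suc k)"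
proof -
  let ?f = "\<lambda>(a,b). margin Pr a b"
  have l: "length (zip p (tl p)) = length p - 1" by simp
  have z: "zip p (tl p) ! k = (p ! k, p ! Suc k)" using assms by (simp add: nth_tl)
  have "map ?f (zip p (tl p)) ! k = margin Pr (p ! k) (p ! Suc k)" using assms z by simp
  moreover have "k < length (map ?f (zip p (tl p)))" using assms by simp
  ultimately have "margin Pr (p ! k) (p ! Suc k) \<in> set (map ?f (zip p (tl p)))"
    by (metis nth_mem)
  then show ?thesis unfolding path_strength_def by (intro Min_le) auto
qed

theorem theorem7p5:
  fixes F :: "('v,'c) prof \<Rightarrow> 'c set"
  assumes "infinite (UNIV :: 'v set)" and "infinite (UNIV :: 'c set)"
    and "VSCC F"
    and "anonymity F" and "neutrality F" and "neutral_indifference F"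
    and "monotonicity_two F" and "neutral_reversal F" and "coherent_IIA F"
    and "profile Pr"
  shows "SC Pr \<subseteq> F Pr"
proof
  note inf = assms(1) and vs = assms(3) and an = assms(4) and ne = assms(5) and ni = assms(6)
    and mo = assms(7) and nr = assms(8) and ci = assms(9) and P = assms(10)
  fix y assume yS: "y \<in> SC Pr"
  then have yC: "y \<in> cands Pr" and nsc: "\<And>x. (x,y) \<notin> sc Pr" unfolding SC_def by auto
  show "y \<in> F Pr"
  proof (rule ccontr)
    assume yF: "y \<notin> F Pr"
    define N where "N = card (cands Pr) * (2 * card (voters Pr))"
    obtain Ps where Ps: "profile Ps" "cands Ps = cands Pr" "F Ps = F Pr" "margin Ps = margin Pr"
      and bnd: "\<forall>a\<in>cands Pr. \<forall>b\<in>cands Pr. a \<noteq> b \<longrightarrow>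
        card (voters Pr) \<le> card {i\<in>voters Ps. (a,b) \<in> ballot Ps i} \<and>
        card {i\<in>voters Ps. (a,b) \<in> ballot Ps i} \<le> 2 * card (voters Pr)"
      and emp: "N \<le> card {i\<in>voters Ps. ballot Ps i = {}}"
      using build_Pstar[OF ni nr inf P, of N] by blast
    have "y \<in> cands Ps" "y \<notin> F Ps" using yC yF Ps by auto
    then obtain x where xC: "x \<in> cands Ps" and H: "\<And>P'. profile P' \<Longrightarrow> coh_rel Ps x y P' \<Longrightarrow> y \<notin> F P'"
      using ci[unfolded coherent_IIA_def, rule_format, OF conjI[OF Ps(1)]] by blast
    have xC': "x \<in> cands Pr" using xC Ps by simp
    have "(x,y) \<notin> sc Pr" by (rule nsc)
    then have cases: "margin Pr x y \<le> 0 \<or> (\<exists>p. majority_path Pr p y x \<and> margin Pr x y \<le> path_strength Pr p)"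
      using xC' yC unfolding sc_def by auto
    show False
    proof (cases "margin Pr x y \<le> 0")
      case True
      let ?P' = "restrict_prof Ps {x,y}"
      have pr': "profile ?P'" using profile_restrict[OF Ps(1)] xC yC Ps(2) by auto
      have co: "coh_rel Ps x y ?P'" using coh_rel_restrict[OF Ps(1) xC] yC Ps(2) by auto
      have "y \<in> F ?P'"
      proof (cases "x = y")
        case True
        then show ?thesis using vs[unfolded VSCC_def, rule_format, OF pr'] by auto
      next
        case False
        have "margin ?P' y x \<ge> 0" using \<open>margin Pr x y \<le> 0\<close> Ps(4) margin_anti[of Pr x y]
          by (simp add: margin_restrict)
        then show ?thesis using two_cand[OF vs an ne mo pr', of x y] False by auto
      qed
      then show False using H[OF pr' co] by simp
    next
      case False
      then have mpos: "margin Pr x y > 0" by simp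
      then obtain p where mp: "majority_path Pr p y x" and st: "margin Pr x y \<le> path_strength Pr p"
        using cases by auto
      define n where "n = length p"
      define a where "a = (\<lambda>u. p ! u)"
      have n2: "n \<ge> 2" and dp: "distinct p" and sp: "set p \<subseteq> cands Pr" and hp: "hd p = y"
        and lp: "last p = x" and mg: "\<forall>k < n - 1. margin Pr (p ! k) (p ! Suc k) > 0"
        using mp unfolding majority_path_def n_def by auto
      have pne: "p \<noteq> []" using n2 unfolding n_def by auto
      have a0: "a 0 = y" using hp pne unfolding a_def by (simp add: hd_conv_nth)
      have an1: "a (n - 1) = x" using lp pne unfolding a_def n_def by (simp add: last_conv_nth)
      have n3: "n \<ge> 3"
      proof (rule ccontr)
        assume "\<not> n \<ge> 3"
        then have "n = 2" using n2 by simp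
        then have "margin Pr (a 0) (a 1) > 0" using mg unfolding a_def by auto
        then have "margin Pr y x > 0" using a0 an1 \<open>n = 2\<close> by simp
        then show False using mpos margin_anti[of Pr x y] by simp
      qed
      have ainj: "inj_on a {..<n}" using dp unfolding a_def n_def by (simp add: inj_on_nth)
      interpret cyc n a using n3 ainj by unfold_locales
      have Cset: "C = set p" unfolding C_def by (auto simp: a_def n_def in_set_conv_nth)
      have CP: "C \<subseteq> cands Ps" using sp Cset Ps(2) by simp
      define m where "m = nat (margin Pr x y)"
      have mi: "int m = margin Pr x y" using mpos unfolding m_def by simp
      have xy: "x \<noteq> y" using mpos by auto
      have cX: "card {i\<in>voters Ps. (a (n-1), a 0) \<in> ballot Ps i} = card {i\<in>voters Ps. (a 0, a (n-1)) \<in> ballot Ps i} + m"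
      proof -
        have "margin Ps x y = int m" using mi Ps(4) by simp
        then have "int (card {i\<in>voters Ps. (x,y) \<in> ballot Ps i}) = int (card {i\<in>voters Ps. (y,x) \<in> ballot Ps i}) + int m"
          unfolding margin_def by linarith
        then show ?thesis unfolding a0 an1 by simp
      qed
      have fV: "finite (voters Pr)" using P unfolding profile_def by auto
      have "int m \<le> int (card {i\<in>voters Pr. (x,y) \<in> ballot Pr i})" using mi unfolding margin_def by simp
      also have "card {i\<in>voters Pr. (x,y) \<in> ballot Pr i} \<le> card (voters Pr)" using fV by (intro card_mono) auto
      finally have mV: "m \<le> card (voters Pr)" by simp
      have bY: "card (voters Pr) \<le> card {i\<in>voters Ps. (y,x) \<in> ballot Ps i}"
        "card {i\<in>voters Ps. (y,x) \<in> ballot Ps i} \<le> 2 * card (voters Pr)"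
        using bnd xC' yC xy by auto
      have mY: "m \<le> card {i\<in>voters Ps. (a 0, a (n-1)) \<in> ballot Ps i}" using mV bY a0 an1 by simp
      have fC: "finite (cands Pr)" using P unfolding profile_def by auto
      have "n = card (set p)" using dp unfolding n_def by (simp add: distinct_card)
      also have "\<dots> \<le> card (cands Pr)" using sp fC by (intro card_mono)
      finally have nC: "n \<le> card (cands Pr)" .
      have fVs: "finite (voters Ps)" using Ps(1) unfolding profile_def by auto
      have "(n-2) * card {i\<in>voters Ps. (a 0, a (n-1)) \<in> ballot Ps i} \<le> card (cands Pr) * (2 * card (voters Pr))"
        using bY a0 an1 nC by (intro mult_le_mono) auto
      also have "\<dots> \<le> card {i\<in>voters Ps. ballot Ps i = {}}" using emp unfolding N_def .
      also have "\<dots> \<le> card {i\<in>voters Ps. (a (n-1), a 0) \<notin> ballot Ps i \<and> (a 0, a (n-1)) \<notin> ballot Ps i}"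
        using fVs by (intro card_mono) auto
      finally have cT: "(n-2) * card {i\<in>voters Ps. (a 0, a (n-1)) \<in> ballot Ps i} \<le>
             card {i\<in>voters Ps. (a (n-1), a 0) \<notin> ballot Ps i \<and> (a 0, a (n-1)) \<notin> ballot Ps i}" .
      obtain P2 where P2: "profile P2" "voters P2 = voters Ps" "cands P2 = C"
        and restr: "\<forall>i. ballot P2 i \<inter> {a (n-1), a 0} \<times> {a (n-1), a 0} = ballot Ps i \<inter> {a (n-1), a 0} \<times> {a (n-1), a 0}"
        and marg: "\<forall>u<n. \<forall>v<n. margin P2 (a u) (a v) = (if v = nx u then int m else if u = nx v then - int m else 0)"
        and yF2: "a 0 \<in> F P2"
        using cycle_main[OF vs an ne Ps(1) CP cX mY cT] by blast
      have req: "restrict_prof Ps {x,y} = restrict_prof P2 {x,y}"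
        using restr P2(2) a0 an1 unfolding restrict_prof_def voters_def cands_def ballot_def
        by (auto simp: fun_eq_iff)
      have req2: "restrict_prof Ps {y,x} = restrict_prof P2 {y,x}" using req by (simp add: insert_commute)
      have xyC: "{x,y} \<subseteq> C" using aC a0 an1 n3 by auto
      have co: "coh_rel Ps x y P2"
        unfolding coh_rel_def
      proof (intro conjI ballI)
        show "restrict_prof Ps {x,y} = restrict_prof P2 {x,y}" by (rule req)
        show "{x,y} \<subseteq> cands P2" using xyC P2(3) by simp
        show "cands P2 \<subseteq> cands Ps" using CP P2(3) by simp
      next
        fix c d assume c: "c \<in> cands P2" and d: "d \<in> cands P2"
        then obtain u v where uv: "u < n" "v < n" "c = a u" "d = a v" using P2(3) unfolding C_def by auto
        show "0 < margin P2 c d \<longrightarrow> 0 < margin Ps c d \<and> margin P2 c d \<le> margin Ps c d"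
        proof
          assume pos: "0 < margin P2 c d"
          then have vn: "v = nx u" and mm: "margin P2 c d = int m"
            using marg uv by (auto split: if_splits)
          have "int m \<le> margin Ps (a u) (a (nx u))"
          proof (cases "u = n - 1")
            case True
            then show ?thesis using nx_last a0 an1 mi Ps(4) by simp
          next
            case False
            then have "nx u = Suc u" "u < n - 1" using uv unfolding nx_def by auto
            then show ?thesis using strength_le[of u p Pr] st mi Ps(4) unfolding a_def n_def by simp
          qed
          then show "0 < margin Ps c d \<and> margin P2 c d \<le> margin Ps c d" using pos mm uv vn by simp
        qed
        show "{c,d} = {x,y} \<longrightarrow> margin P2 c d = margin Ps c d"
        proof
          assume "{c,d} = {x,y}"
          then have "(c = x \<and> d = y) \<or> (c = y \<and> d = x)" by (auto simp: doubleton_eq_iff)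
          then show "margin P2 c d = margin Ps c d"
            using margin_eq_restrict[OF req] margin_eq_restrict[OF req2] by auto
        qed
      qed
      show False using H[OF P2(1) co] yF2 a0 by simp
    qed
  qed
qed


end
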